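(* Let $\alpha$ be a hybrid program, $S\subseteq\mathrm{VAR}(\alpha)$, $\phi_{pre},\phi_{post}$ formulas, $o:S\to\mathbb{R}_{\ge0}$ an offset function, and $d,r\in\mathbb{R}$. Suppose that $\alpha$ is forward $r$-safe for $\phi_{pre}$ and $\phi_{post}$ with $r>0$, and that $\alpha_{S,o}$ and $\alpha$ are at forward simulation distance $d$ with respect to $\phi_{pre}$ and $\mathrm{VAR}(\phi_{post})$. Then $\alpha$ is forward $\delta$-robust under $o$-bounded $S$-attacks (for $\phi_{pre},\phi_{post}$) for some $\delta$ with $\delta\ge (r-d)/r$.
   Context: Fix a set $V$ of real-valued variables; a state is a map $\omega:V\to\mathbb{R}$, $\mathcal{S}$ the set of states. Hybrid programs: $x:=\theta$, $x:=*$, $x'=\theta\,\&\,Q$, $?\phi$, $\alpha;\beta$, $\alpha\cup\beta$, $\alpha^*$, with the standard relational semantics $[\![\alpha]\!]\subseteq\mathcal{S}\times\mathcal{S}$ of differential dynamic logic (assignment updates one variable; $x:=*$ sets $x$ to an arbitrary real; $x'=\theta\,\&\,Q$ follows a solution of the ODE for some duration $r\ge0$ staying in $[\![Q]\!]$ throughout; test, relational composition, union, reflexive-transitive closure). Formulas of dL (comparisons, $\neg,\wedge,\forall$, $[\alpha]\phi$) have semantics $[\![\phi]\!]\subseteq\mathcal{S}$. $[\![\mathrm{SP}(\alpha,\phi)]\!]=\{\nu\mid\exists\omega\in[\![\phi]\!],(\omega,\nu)\in[\![\alpha]\!]\}$. $\mathrm{VAR}(\alpha)$ and $\mathrm{VAR}(\phi)$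 denote the sets of variables (free and bound) of a program and of a formula. Distances: $d(\omega,\nu)=\sqrt{\sum_{x\in V}(\omega(x)-\nu(x))^2}$ and, for $H\subseteq V$, $d_H(\omega,\nu)=\sqrt{\sum_{x\in H}(\omega(x)-\nu(x))^2}$. For $X\subseteq\mathcal{S}$, $\mathrm{Dist}(\omega,X)=\inf\{d(\omega,\nu)\mid\nu\notin X\}$ if $\omega\in X$ and $-\inf\{d(\omega,\nu)\mid\nu\in X\}$ if $\omega\notin X$ (infima in $\mathbb{R}\cup\{\pm\infty\}$, $\inf\emptyset=\infty$). $\alpha$ is forward $r$-safe for $\phi_{pre}$ and $\phi_{post}$ if $r=\inf\{\mathrm{Dist}(\nu,[\![\phi_{post}]\!])\mid\nu\in[\![\mathrm{SP}(\alpha,\phi_{pre})]\!]\}$. Sensor modeling: each sensor variable $q_s$ has an associated physical variable $q_p$, and sensor reads are assignments $q_s:=q_p$. For $S\subseteq\mathrm{VAR}(\alpha)$ and $o:S\to\mathbb{R}_{\ge0}$, $\alpha_{S,o}$ is obtained from $\alpha$ by replacing every assignment to a variable $q_s\in S$ with $q_s:=*\,;\ ?(q_s\ge q_p-o(q_s)\wedge q_s\le q_p+o(q_s))$. Forward simulation distance: programs $\alpha_1,\alpha_2$ are at forward simulation distance $d$ with respect to $\phi_{pre}$ and $H\subseteq V$ if for every $\nu_1\in[\![\mathrm{SP}(\alpha_1,\phi_{pre})]\!]$ there is $\nu_2\in[\![\mathrm{SP}(\alpha_2,\phi_{pre})]\!]$ with $d_H(\nu_1,\nu_2)\le d$. Forward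 robustness: $\alpha$ is forward $\delta$-robust under $o$-bounded $S$-attacks (for $\phi_{pre},\phi_{post}$) if there are reals $r>0$ and $r_1$ such that $\alpha$ is forward $r$-safe, $\alpha_{S,o}$ is forward $r_1$-safe (both for $\phi_{pre},\phi_{post}$), and $\delta=r_1/r$. *)

theory Defs
  imports "HOL-Analysis.Analysis" "HOL-Library.Extended_Real"
begin

text \<open>Variables form a finite type 'v (the fixed finite set V); states are maps 'v => real.\<close>

type_synonym 'v state = "'v \<Rightarrow> real"

datatype 'v trm =
    Var 'v
  | Const real
  | Neg "'v trm"
  | Plus "'v trm" "'v trm"
  | Times "'v trm" "'v trm"

primrec tsem :: "'v trm \<Rightarrow> 'v state \<Rightarrow> real" where
  "tsem (Var x) w = w x"
| "tsem (Const c) w = c"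
| "tsem (Neg t) w = - tsem t w"
| "tsem (Plus t u) w = tsem t w + tsem u w"
| "tsem (Times t u) w = tsem t w * tsem u w"

primrec tvars :: "'v trm \<Rightarrow> 'v set" where
  "tvars (Var x) = {x}"
| "tvars (Const c) = {}"
| "tvars (Neg t) = tvars t"
| "tvars (Plus t u) = tvars t \<union> tvars u"
| "tvars (Times t u) = tvars t \<union> tvars u"

datatype 'v hp =
    Assign 'v "'v trm"
  | AssignAny 'v
  | ODE 'v "'v trm" "'v fml"
  | Test "'v fml"
  | Seq "'v hp" "'v hp"
  | Choice "'v hp" "'v hp"
  | Loop "'v hp"
and 'v fml =
    Geq "'v trm" "'v trm"
  | Gt "'v trm" "'v trm"
  | Equal "'v trm" "'v trm"
  | Not "'v fml"
  | And "'v fml" "'v fml"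
  | Forall 'v "'v fml"
  | Box "'v hp" "'v fml"

primrec hp_sem :: "'v hp \<Rightarrow> ('v state \<times> 'v state) set"
  and fml_sem :: "'v fml \<Rightarrow> 'v state set" where
  "hp_sem (Assign x t) = {(w, v). v = w(x := tsem t w)}"
| "hp_sem (AssignAny x) = {(w, v). \<exists>c. v = w(x := c)}"
| "hp_sem (ODE x t Q) = {(w, v). \<exists>r f. r \<ge> 0 \<and> f 0 = w x \<and> v = w(x := f r)
      \<and> (\<forall>s\<in>{0..r}. (f has_real_derivative tsem t (w(x := f s))) (at s within {0..r}))
      \<and> (\<forall>s\<in>{0..r}. w(x := f s) \<in> fml_sem Q)}"
| "hp_sem (Test P) = {(w, v). v = w \<and> w \<in> fml_sem P}"
| "hp_sem (Seq a b) = hp_sem a O hp_sem b"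
| "hp_sem (Choice a b) = hp_sem a \<union> hp_sem b"
| "hp_sem (Loop a) = (hp_sem a)\<^sup>*"
| "fml_sem (Geq t u) = {w. tsem t w \<ge> tsem u w}"
| "fml_sem (Gt t u) = {w. tsem t w > tsem u w}"
| "fml_sem (Equal t u) = {w. tsem t w = tsem u w}"
| "fml_sem (Not P) = - fml_sem P"
| "fml_sem (And P Q) = fml_sem P \<inter> fml_sem Q"
| "fml_sem (Forall x P) = {w. \<forall>c. w(x := c) \<in> fml_sem P}"
| "fml_sem (Box a P) = {w. \<forall>v. (w, v) \<in> hp_sem a \<longrightarrow> v \<in> fml_sem P}"

primrec hp_vars :: "'v hp \<Rightarrow> 'v set" and fml_vars :: "'v fml \<Rightarrow> 'v set" where
  "hp_vars (Assign x t) = {x} \<union> tvars t"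
| "hp_vars (AssignAny x) = {x}"
| "hp_vars (ODE x t Q) = {x} \<union> tvars t \<union> fml_vars Q"
| "hp_vars (Test P) = fml_vars P"
| "hp_vars (Seq a b) = hp_vars a \<union> hp_vars b"
| "hp_vars (Choice a b) = hp_vars a \<union> hp_vars b"
| "hp_vars (Loop a) = hp_vars a"
| "fml_vars (Geq t u) = tvars t \<union> tvars u"
| "fml_vars (Gt t u) = tvars t \<union> tvars u"
| "fml_vars (Equal t u) = tvars t \<union> tvars u"
| "fml_vars (Not P) = fml_vars P"
| "fml_vars (And P Q) = fml_vars P \<union> fml_vars Q"
| "fml_vars (Forall x P) = {x} \<union> fml_vars P"
| "fml_vars (Box a P) = hp_vars a \<union> fml_vars P"

definition SP :: "'v hp \<Rightarrow> 'v fml \<Rightarrow> 'v state set" where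
  "SP a P = {v. \<exists>w\<in>fml_sem P. (w, v) \<in> hp_sem a}"

definition sdist :: "('v::finite) state \<Rightarrow> 'v state \<Rightarrow> real" where
  "sdist w v = sqrt (\<Sum>x\<in>UNIV. (w x - v x)\<^sup>2)"

definition sdistH :: "'v set \<Rightarrow> 'v state \<Rightarrow> 'v state \<Rightarrow> real" where
  "sdistH H w v = sqrt (\<Sum>x\<in>H. (w x - v x)\<^sup>2)"

text \<open>Signed distance to a set of states, in the extended reals (Inf {} = \<infinity>).\<close>
definition Dist :: "('v::finite) state \<Rightarrow> 'v state set \<Rightarrow> ereal" where
  "Dist w X = (if w \<in> X then Inf {ereal (sdist w v) | v. v \<notin> X}
               else - Inf {ereal (sdist w v) | v. v \<in> X})"

definition fwd_safe :: "('v::finite) hp \<Rightarrow> 'v fml \<Rightarrow> 'v fml \<Rightarrow> real \<Rightarrow> bool" where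
  "fwd_safe a pre post r \<longleftrightarrow>
     ereal r = Inf {Dist v (fml_sem post) | v. v \<in> SP a pre}"

text \<open>Attacked program alpha_{S,o}; phys maps each sensor variable q_s to its physical variable q_p.\<close>
primrec attack :: "('v \<Rightarrow> 'v) \<Rightarrow> 'v set \<Rightarrow> ('v \<Rightarrow> real) \<Rightarrow> 'v hp \<Rightarrow> 'v hp" where
  "attack ph S off (Assign x t) =
     (if x \<in> S then Seq (AssignAny x)
        (Test (And (Geq (Var x) (Plus (Var (ph x)) (Const (- off x))))
                   (Geq (Plus (Var (ph x)) (Const (off x))) (Var x))))
      else Assign x t)"
| "attack ph S off (AssignAny x) = AssignAny x"
| "attack ph S off (ODE x t Q) = ODE x t Q"
| "attack ph S off (Test P) = Test P"
| "attack ph S off (Seq a b) = Seq (attack ph S off a) (attack ph S off b)"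
| "attack ph S off (Choice a b) = Choice (attack ph S off a) (attack ph S off b)"
| "attack ph S off (Loop a) = Loop (attack ph S off a)"

text \<open>Sensor modeling convention: every assignment to a sensor variable q_s in S is a sensor
  read q_s := q_p.\<close>
primrec sensor_reads :: "('v \<Rightarrow> 'v) \<Rightarrow> 'v set \<Rightarrow> 'v hp \<Rightarrow> bool" where
  "sensor_reads ph S (Assign x t) = (x \<in> S \<longrightarrow> t = Var (ph x))"
| "sensor_reads ph S (AssignAny x) = True"
| "sensor_reads ph S (ODE x t Q) = True"
| "sensor_reads ph S (Test P) = True"
| "sensor_reads ph S (Seq a b) = (sensor_reads ph S a \<and> sensor_reads ph S b)"
| "sensor_reads ph S (Choice a b) = (sensor_reads ph S a \<and> sensor_reads ph S b)"
| "sensor_reads ph S (Loop a) = sensor_reads ph S a"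

definition fwd_sim_dist :: "'v hp \<Rightarrow> 'v hp \<Rightarrow> 'v fml \<Rightarrow> 'v set \<Rightarrow> real \<Rightarrow> bool" where
  "fwd_sim_dist a1 a2 pre H d \<longleftrightarrow>
     (\<forall>v1\<in>SP a1 pre. \<exists>v2\<in>SP a2 pre. sdistH H v1 v2 \<le> d)"

definition fwd_robust :: "('v \<Rightarrow> 'v) \<Rightarrow> ('v::finite) hp \<Rightarrow> 'v set \<Rightarrow> ('v \<Rightarrow> real)
    \<Rightarrow> 'v fml \<Rightarrow> 'v fml \<Rightarrow> real \<Rightarrow> bool" where
  "fwd_robust ph a S off pre post \<delta> \<longleftrightarrow>
     (\<exists>r r1. r > 0 \<and> fwd_safe a pre post r \<and> fwd_safe (attack ph S off a) pre post r1
            \<and> \<delta> = r1 / r)"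

end

theory Submission
  imports Defs
begin

lemma tsem_coinc: "(\<forall>x\<in>tvars t. w x = w' x) \<Longrightarrow> tsem t w = tsem t w'"
  by (induct t) auto

lemma coinc:
  fixes a :: "'v hp" and P :: "'v fml"
  shows "(\<forall>V w w' v. hp_vars a \<subseteq> V \<longrightarrow> (\<forall>x\<in>V. w x = w' x) \<longrightarrow> (w,v) \<in> hp_sem a \<longrightarrow>
      (\<exists>v'. (w',v') \<in> hp_sem a \<and> (\<forall>x\<in>V. v x = v' x)))"
  "(\<forall>V w w'. fml_vars P \<subseteq> V \<longrightarrow> (\<forall>x\<in>V. w x = w' x) \<longrightarrow> (w \<in> fml_sem P \<longleftrightarrow> w' \<in> fml_sem P))"
proof (induct a and P)
  case (Assign x t)
  then show ?case
    apply clarsimp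
    apply (rule tsem_coinc)
    by blast
next
  case (AssignAny x)
  then show ?case
    apply clarsimp
    subgoal for V w w' c by (rule exI[of _ "w'(x := c)"]) auto
    done
next
  case (ODE x t Q)
  show ?case
  proof (intro allI impI)
    fix V and w w' v :: "'v state"
    assume V: "hp_vars (ODE x t Q) \<subseteq> V" and ag: "\<forall>x\<in>V. w x = w' x" and wv: "(w, v) \<in> hp_sem (ODE x t Q)"
    from wv obtain r f where r: "r \<ge> 0" "f 0 = w x" "v = w(x := f r)"
      and der: "\<forall>s\<in>{0..r}. (f has_real_derivative tsem t (w(x := f s))) (at s within {0..r})"
      and inQ: "\<forall>s\<in>{0..r}. w(x := f s) \<in> fml_sem Q" by auto
    have ag2: "\<forall>y\<in>V. (w(x := c)) y = (w'(x := c)) y" for c using ag by auto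
    have "tsem t (w(x := f s)) = tsem t (w'(x := f s))" for s
      using tsem_coinc[of t "w(x := f s)" "w'(x := f s)"] ag2 V by auto
    moreover have "w(x := f s) \<in> fml_sem Q \<longleftrightarrow> w'(x := f s) \<in> fml_sem Q" for s
    proof -
      have "fml_vars Q \<subseteq> V" using V by simp
      then show ?thesis using ODE[rule_format, of V "w(x := f s)" "w'(x := f s)"] ag2[of "f s"] by blast
    qed
    moreover have "f 0 = w' x" using r ag V by auto
    ultimately have "(w', w'(x := f r)) \<in> hp_sem (ODE x t Q)"
      using r der inQ by auto
    moreover have "\<forall>y\<in>V. v y = (w'(x := f r)) y" using r ag by auto
    ultimately show "\<exists>v'. (w', v') \<in> hp_sem (ODE x t Q) \<and> (\<forall>x\<in>V. v x = v' x)" by blast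
  qed
next
  case (Test P)
  then show ?case by (simp, blast)
next
  case (Seq a b)
  show ?case
  proof (intro allI impI)
    fix V and w w' v :: "'v state"
    assume V: "hp_vars (Seq a b) \<subseteq> V" and ag: "\<forall>x\<in>V. w x = w' x" and wv: "(w, v) \<in> hp_sem (Seq a b)"
    then obtain u where "(w,u) \<in> hp_sem a" "(u,v) \<in> hp_sem b" by auto
    moreover have Va: "hp_vars a \<subseteq> V" "hp_vars b \<subseteq> V" using V by auto
    ultimately obtain u' where "(w',u') \<in> hp_sem a" "\<forall>x\<in>V. u x = u' x"
      using Seq(1)[rule_format, of V w w' u] ag by blast
    with Seq(2)[rule_format, of V u u' v] Va \<open>(u,v) \<in> hp_sem b\<close> obtain v' where "(u',v') \<in> hp_sem b" "\<forall>x\<in>V. v x = v' x" by blast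
    then show "\<exists>v'. (w', v') \<in> hp_sem (Seq a b) \<and> (\<forall>x\<in>V. v x = v' x)"
      using \<open>(w',u') \<in> hp_sem a\<close> by auto
  qed
next
  case (Choice a b)
  show ?case
  proof (intro allI impI)
    fix V and w w' v :: "'v state"
    assume V: "hp_vars (Choice a b) \<subseteq> V" and ag: "\<forall>x\<in>V. w x = w' x" and wv: "(w, v) \<in> hp_sem (Choice a b)"
    have Va: "hp_vars a \<subseteq> V" "hp_vars b \<subseteq> V" using V by auto
    from wv have "(w, v) \<in> hp_sem a \<or> (w, v) \<in> hp_sem b" by simp
    then show "\<exists>v'. (w', v') \<in> hp_sem (Choice a b) \<and> (\<forall>x\<in>V. v x = v' x)"
    proof
      assume "(w, v) \<in> hp_sem a"
      then obtain v' where "(w', v') \<in> hp_sem a" "\<forall>x\<in>V. v x = v' x"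
        using Choice(1)[rule_format, of V w w' v] Va ag by blast
      then show ?thesis by auto
    next
      assume "(w, v) \<in> hp_sem b"
      then obtain v' where "(w', v') \<in> hp_sem b" "\<forall>x\<in>V. v x = v' x"
        using Choice(2)[rule_format, of V w w' v] Va ag by blast
      then show ?thesis by auto
    qed
  qed
next
  case (Loop a)
  show ?case
  proof (intro allI impI)
    fix V and w w' v :: "'v state"
    assume V: "hp_vars (Loop a) \<subseteq> V" and ag: "\<forall>x\<in>V. w x = w' x" and wv: "(w, v) \<in> hp_sem (Loop a)"
    from wv have "(w, v) \<in> (hp_sem a)\<^sup>*" by simp
    then have "\<exists>v'. (w', v') \<in> (hp_sem a)\<^sup>* \<and> (\<forall>x\<in>V. v x = v' x)"
    proof (induct rule: rtrancl_induct)
      case base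
      then show ?case using ag by auto
    next
      case (step y z)
      then obtain y' where "(w', y') \<in> (hp_sem a)\<^sup>*" "\<forall>x\<in>V. y x = y' x" by blast
      with Loop[rule_format, of V y y' z] V step(2) obtain z' where "(y',z') \<in> hp_sem a" "\<forall>x\<in>V. z x = z' x" by auto
      then show ?case using \<open>(w', y') \<in> (hp_sem a)\<^sup>*\<close> by (meson rtrancl.rtrancl_into_rtrancl)
    qed
    then show "\<exists>v'. (w', v') \<in> hp_sem (Loop a) \<and> (\<forall>x\<in>V. v x = v' x)" by simp
  qed
next
  case (Geq t u)
  show ?case
  proof (intro allI impI)
    fix V and w w' :: "'v state" assume "fml_vars (Geq t u) \<subseteq> V" "\<forall>x\<in>V. w x = w' x"
    then have "tsem t w = tsem t w'" "tsem u w = tsem u w'" by (auto intro!: tsem_coinc)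
    then show "w \<in> fml_sem (Geq t u) \<longleftrightarrow> w' \<in> fml_sem (Geq t u)" by simp
  qed
next
  case (Gt t u)
  show ?case
  proof (intro allI impI)
    fix V and w w' :: "'v state" assume "fml_vars (Gt t u) \<subseteq> V" "\<forall>x\<in>V. w x = w' x"
    then have "tsem t w = tsem t w'" "tsem u w = tsem u w'" by (auto intro!: tsem_coinc)
    then show "w \<in> fml_sem (Gt t u) \<longleftrightarrow> w' \<in> fml_sem (Gt t u)" by simp
  qed
next
  case (Equal t u)
  show ?case
  proof (intro allI impI)
    fix V and w w' :: "'v state" assume "fml_vars (Equal t u) \<subseteq> V" "\<forall>x\<in>V. w x = w' x"
    then have "tsem t w = tsem t w'" "tsem u w = tsem u w'" by (auto intro!: tsem_coinc)
    then show "w \<in> fml_sem (Equal t u) \<longleftrightarrow> w' \<in> fml_sem (Equal t u)" by simp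
  qed
next
  case (Not P)
  then show ?case by simp
next
  case (And P Q)
  show ?case
  proof (intro allI impI)
    fix V and w w' :: "'v state"
    assume V: "fml_vars (And P Q) \<subseteq> V" and ag: "\<forall>x\<in>V. w x = w' x"
    have Va: "fml_vars P \<subseteq> V" "fml_vars Q \<subseteq> V" using V by auto
    show "w \<in> fml_sem (And P Q) \<longleftrightarrow> w' \<in> fml_sem (And P Q)"
      using And(1)[rule_format, of V w w'] And(2)[rule_format, of V w w'] Va ag by simp
  qed
next
  case (Forall x P)
  show ?case
  proof (intro allI impI)
    fix V and w w' :: "'v state"
    assume V: "fml_vars (Forall x P) \<subseteq> V" and ag: "\<forall>x\<in>V. w x = w' x"
    have "w(x := c) \<in> fml_sem P \<longleftrightarrow> w'(x := c) \<in> fml_sem P" for c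
      using Forall[rule_format, of V "w(x := c)" "w'(x := c)"] V ag by auto
    then show "w \<in> fml_sem (Forall x P) \<longleftrightarrow> w' \<in> fml_sem (Forall x P)" by auto
  qed
next
  case (Box a P)
  show ?case
  proof (intro allI impI)
    fix V and w w' :: "'v state"
    assume V: "fml_vars (Box a P) \<subseteq> V" and ag: "\<forall>x\<in>V. w x = w' x"
    have one: "w2 \<in> fml_sem (Box a P)" if "w1 \<in> fml_sem (Box a P)" "\<forall>x\<in>V. w2 x = w1 x" for w1 w2
    proof -
      have "v \<in> fml_sem P" if "(w2, v) \<in> hp_sem a" for v
      proof -
        from Box(1)[rule_format, of V w2 w1 v] V \<open>\<forall>x\<in>V. w2 x = w1 x\<close> that
        obtain v' where "(w1, v') \<in> hp_sem a" "\<forall>x\<in>V. v x = v' x" by auto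
        then show ?thesis using Box(2)[rule_format, of V v v'] V \<open>w1 \<in> fml_sem (Box a P)\<close> by auto
      qed
      then show ?thesis by simp
    qed
    show "w \<in> fml_sem (Box a P) \<longleftrightarrow> w' \<in> fml_sem (Box a P)"
    proof -
      have ag': "\<forall>x\<in>V. w' x = w x" using ag by simp
      show ?thesis using one[of w w'] one[of w' w] ag ag' by blast
    qed
  qed
qed

lemma attack_sub:
  "sensor_reads ph S a \<Longrightarrow> \<forall>x\<in>S. off x \<ge> 0 \<Longrightarrow> hp_sem a \<subseteq> hp_sem (attack ph S off a)"
proof (induct a)
  case (Assign x t)
  show ?case
  proof (cases "x \<in> S")
    case True
    with Assign have t: "t = Var (ph x)" and o: "off x \<ge> 0" by auto
    show ?thesis
    proof
      fix p assume "p \<in> hp_sem (Assign x t)"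
      then obtain w where p: "p = (w, w(x := w (ph x)))" using t by auto
      let ?T = "Test (And (Geq (Var x) (Plus (Var (ph x)) (Const (- off x))))
                   (Geq (Plus (Var (ph x)) (Const (off x))) (Var x)))"
      have A: "(w, w(x := w (ph x))) \<in> hp_sem (AssignAny x)" by auto
      have B: "(w(x := w (ph x)), w(x := w (ph x))) \<in> hp_sem ?T"
        using o by (cases "ph x = x") auto
      show "p \<in> hp_sem (attack ph S off (Assign x t))" using relcompI[OF A B] True p by simp
    qed
  next
    case False
    then show ?thesis by simp
  qed
next
  case (Seq a b)
  then show ?case by (simp add: relcomp_mono)
next
  case (Choice a b)
  then show ?case by auto
next
  case (Loop a)
  then show ?case by (simp add: rtrancl_mono)
qed auto

lemma sdist_sym: "sdist a b = sdist b a"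
  unfolding sdist_def by (simp add: power2_commute)

lemma sdistH_sym: "sdistH H a b = sdistH H b a"
  unfolding sdistH_def by (simp add: power2_commute)

lemma sdistH_le: "sdistH H a b \<le> sdist (a::('v::finite) state) b"
  unfolding sdistH_def sdist_def
  by (intro real_sqrt_le_mono sum_mono2) auto

lemma sdistH_tri: "sdistH H a c \<le> sdistH H a b + sdistH H b c"
proof -
  have "sdistH H a c = L2_set (\<lambda>x. (a x - b x) + (b x - c x)) H"
    unfolding sdistH_def L2_set_def by simp
  also have "\<dots> \<le> L2_set (\<lambda>x. a x - b x) H + L2_set (\<lambda>x. b x - c x) H"
    by (rule L2_set_triangle_ineq)
  also have "\<dots> = sdistH H a b + sdistH H b c"
    unfolding sdistH_def L2_set_def by simp
  finally show ?thesis .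
qed

lemma sdistH_cong: "\<forall>x\<in>H. a x = a' x \<Longrightarrow> sdistH H a b = sdistH H a' b"
  unfolding sdistH_def by simp

lemma sdist_merge: "sdist (a::('v::finite) state) (\<lambda>x. if x \<in> H then b x else a x) = sdistH H a b"
proof -
  have "(\<Sum>x\<in>UNIV. (a x - (if x \<in> H then b x else a x))\<^sup>2) = (\<Sum>x\<in>UNIV. if x \<in> H then (a x - b x)\<^sup>2 else 0)"
    by (rule sum.cong) auto
  also have "\<dots> = (\<Sum>x\<in>UNIV \<inter> H. (a x - b x)\<^sup>2)"
    by (rule sum.inter_restrict[symmetric]) simp
  finally show ?thesis unfolding sdist_def sdistH_def by simp
qed

lemma sdist_scale1: "sdist (a::('v::finite) state) (\<lambda>x. a x + c * (b x - a x)) = \<bar>c\<bar> * sdist a b"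
proof -
  have "(\<Sum>x\<in>UNIV. (a x - (a x + c * (b x - a x)))\<^sup>2) = c\<^sup>2 * (\<Sum>x\<in>UNIV. (a x - b x)\<^sup>2)"
    by (simp add: sum_distrib_left power2_eq_square algebra_simps)
  then show ?thesis unfolding sdist_def by (simp add: real_sqrt_mult)
qed

lemma sdist_scale2: "sdist (b::('v::finite) state) (\<lambda>x. a x + c * (b x - a x)) = \<bar>1 - c\<bar> * sdist a b"
proof -
  have "(\<Sum>x\<in>UNIV. (b x - (a x + c * (b x - a x)))\<^sup>2) = (1 - c)\<^sup>2 * (\<Sum>x\<in>UNIV. (a x - b x)\<^sup>2)"
    by (simp add: sum_distrib_left power2_eq_square algebra_simps)
  then show ?thesis unfolding sdist_def by (simp add: real_sqrt_mult)
qed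

lemma key:
  fixes v1 v2 :: "('v::finite) state" and X :: "'v state set"
  assumes cyl: "\<And>a b. \<forall>x\<in>H. a x = b x \<Longrightarrow> a \<in> X \<longleftrightarrow> b \<in> X"
    and v2X: "v2 \<in> X" and ball: "\<forall>u. u \<notin> X \<longrightarrow> r \<le> sdist v2 u"
    and dH: "sdistH H v1 v2 \<le> d"
  shows "ereal (r - d) \<le> Dist v1 X"
proof (cases "v1 \<in> X")
  case True
  have "ereal (r - d) \<le> Inf {ereal (sdist v1 u) | u. u \<notin> X}"
  proof (rule Inf_greatest, clarify)
    fix u assume u: "u \<notin> X"
    let ?u = "\<lambda>x. if x \<in> H then u x else v2 x"
    have "?u \<notin> X" using cyl[of ?u u] u by auto
    then have "r \<le> sdist v2 ?u" using ball by blast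
    also have "\<dots> = sdistH H v2 u" by (rule sdist_merge)
    also have "\<dots> \<le> sdistH H v2 v1 + sdistH H v1 u" by (rule sdistH_tri)
    also have "\<dots> \<le> d + sdist v1 u" using dH sdistH_le[of H v1 u] sdistH_sym[of H v1 v2] by simp
    finally show "ereal (r - d) \<le> ereal (sdist v1 u)" by simp
  qed
  then show ?thesis using True unfolding Dist_def by simp
next
  case False
  let ?v = "\<lambda>x. if x \<in> H then v2 x else v1 x"
  define D where "D = sdist v1 ?v"
  have D: "D = sdistH H v1 v2" unfolding D_def by (rule sdist_merge)
  have vX: "?v \<in> X" using cyl[of ?v v2] v2X by auto
  have ball': "r \<le> sdist ?v u" if u: "u \<notin> X" for u
  proof -
    let ?u = "\<lambda>x. if x \<in> H then u x else v2 x"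
    have "?u \<notin> X" using cyl[of ?u u] u by auto
    then have "r \<le> sdist v2 ?u" using ball by blast
    also have "\<dots> = sdistH H v2 u" by (rule sdist_merge)
    also have "\<dots> = sdistH H ?v u" by (rule sdistH_cong) auto
    also have "\<dots> \<le> sdist ?v u" by (rule sdistH_le)
    finally show ?thesis .
  qed
  have rD: "r \<le> D" using ball'[OF False] unfolding D_def by (simp add: sdist_sym)
  let ?A = "{ereal (sdist v1 u) | u. u \<in> X}"
  have AD: "Inf ?A \<le> ereal D" unfolding D_def by (rule Inf_lower) (use vX in blast)
  have "Inf ?A \<le> ereal (D - r)"
  proof (rule ereal_le_epsilon2)
    fix e :: real assume e: "0 < e"
    show "Inf ?A \<le> ereal (D - r) + ereal e"
    proof (cases "e \<ge> r")
      case True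
      have "ereal D \<le> ereal (D - r) + ereal e" using True by simp
      with AD show ?thesis by (rule order_trans)
    next
      case False
      define s where "s = r - e"
      have s: "0 < s" "s < r" using False e unfolding s_def by auto
      have Dpos: "D > 0" using s rD by simp
      define p where "p = (\<lambda>x. ?v x + (s / D) * (v1 x - ?v x))"
      have "sdist ?v p = \<bar>s / D\<bar> * sdist ?v v1" unfolding p_def by (rule sdist_scale1)
      also have "\<dots> = s" using Dpos s unfolding D_def by (simp add: sdist_sym)
      finally have ps: "sdist ?v p = s" .
      have "p \<in> X"
      proof (rule ccontr)
        assume "p \<notin> X"
        then have "r \<le> sdist ?v p" by (rule ball')
        with ps s show False by simp
      qed
      have "sdist v1 p = \<bar>1 - s / D\<bar> * sdist ?v v1" unfolding p_def by (rule sdist_scale2)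
      also have "\<dots> = \<bar>1 - s / D\<bar> * D" unfolding D_def by (simp add: sdist_sym)
      also have "\<dots> = (1 - s / D) * D" using Dpos s rD by simp
      also have "\<dots> = D - s" using Dpos by (simp add: algebra_simps)
      finally have pd: "sdist v1 p = D - s" .
      have "Inf ?A \<le> ereal (sdist v1 p)" by (rule Inf_lower) (use \<open>p \<in> X\<close> in blast)
      then have "Inf ?A \<le> ereal (D - s)" using pd by simp
      then show ?thesis unfolding s_def by (simp add: algebra_simps)
    qed
  qed
  also have "\<dots> \<le> ereal (d - r)" using D dH by simp
  finally have "Inf ?A \<le> ereal (d - r)" .
  then have "- ereal (d - r) \<le> - Inf ?A" by (simp only: ereal_minus_le_minus)
  then have "ereal (r - d) \<le> - Inf ?A" by simp
  then show ?thesis using False unfolding Dist_def by simp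
qed

theorem theorem3:
  fixes \<alpha> :: "('v::finite) hp" and S :: "'v set" and ph :: "'v \<Rightarrow> 'v"
    and pre post :: "'v fml" and off :: "'v \<Rightarrow> real" and d r :: real
  assumes "S \<subseteq> hp_vars \<alpha>"
    and "\<forall>x\<in>S. off x \<ge> 0"
    and "sensor_reads ph S \<alpha>"
    and "fwd_safe \<alpha> pre post r" and "r > 0"
    and "fwd_sim_dist (attack ph S off \<alpha>) \<alpha> pre (fml_vars post) d"
  shows "\<exists>\<delta>. fwd_robust ph \<alpha> S off pre post \<delta> \<and> \<delta> \<ge> (r - d) / r"
proof -
  let ?X = "fml_sem post" and ?H = "fml_vars post"
  have cyl: "a \<in> ?X \<longleftrightarrow> b \<in> ?X" if "\<forall>x\<in>?H. a x = b x" for a b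
    using coinc(2)[rule_format, of post ?H a b] that by blast
  let ?D0 = "{Dist v ?X | v. v \<in> SP \<alpha> pre}"
  let ?D1 = "{Dist v ?X | v. v \<in> SP (attack ph S off \<alpha>) pre}"
  have r0: "ereal r = Inf ?D0" using assms(4) unfolding fwd_safe_def by simp
  have ne: "SP \<alpha> pre \<noteq> {}"
  proof
    assume "SP \<alpha> pre = {}"
    then have "?D0 = {}" by simp
    then show False using r0 by (simp add: top_ereal_def)
  qed
  have good: "v2 \<in> ?X \<and> (\<forall>u. u \<notin> ?X \<longrightarrow> r \<le> sdist v2 u)" if v2: "v2 \<in> SP \<alpha> pre" for v2
  proof -
    have rl: "ereal r \<le> Dist v2 ?X" unfolding r0 by (rule Inf_lower) (use v2 in blast)
    have inX: "v2 \<in> ?X"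
    proof (rule ccontr)
      assume n: "v2 \<notin> ?X"
      have "0 \<le> Inf {ereal (sdist v2 u) | u. u \<in> ?X}"
        by (rule Inf_greatest) (auto simp: sdist_def sum_nonneg)
      then have "Dist v2 ?X \<le> 0" using n unfolding Dist_def by simp
      with rl have "ereal r \<le> 0" by (rule order_trans)
      then show False using assms(5) by simp
    qed
    have "r \<le> sdist v2 u" if u: "u \<notin> ?X" for u
    proof -
      have "Dist v2 ?X \<le> ereal (sdist v2 u)" using inX unfolding Dist_def
        by simp (rule Inf_lower, use u in blast)
      with rl have "ereal r \<le> ereal (sdist v2 u)" by (rule order_trans)
      then show ?thesis by simp
    qed
    then show ?thesis using inX by blast
  qed
  have lo: "ereal (r - d) \<le> Inf ?D1"
  proof (rule Inf_greatest, clarify)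
    fix v1 assume v1: "v1 \<in> SP (attack ph S off \<alpha>) pre"
    then obtain v2 where v2: "v2 \<in> SP \<alpha> pre" "sdistH ?H v1 v2 \<le> d"
      using assms(6) unfolding fwd_sim_dist_def by blast
    have g: "v2 \<in> ?X" "\<forall>u. u \<notin> ?X \<longrightarrow> r \<le> sdist v2 u" using good[OF v2(1)] by auto
    show "ereal (r - d) \<le> Dist v1 ?X"
      by (rule key[OF cyl g(1) g(2) v2(2)])
  qed
  have "SP \<alpha> pre \<subseteq> SP (attack ph S off \<alpha>) pre"
    using attack_sub[OF assms(3) assms(2)] unfolding SP_def by blast
  then have "?D0 \<subseteq> ?D1" by blast
  then have hi: "Inf ?D1 \<le> ereal r" unfolding r0 by (rule Inf_superset_mono)
  define r1 where "r1 = real_of_ereal (Inf ?D1)"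
  have I1: "Inf ?D1 = ereal r1" unfolding r1_def using lo hi by (cases "Inf ?D1") auto
  have r1: "r - d \<le> r1" using lo I1 by simp
  have "fwd_robust ph \<alpha> S off pre post (r1 / r)"
    unfolding fwd_robust_def
  proof (intro exI conjI)
    show "fwd_safe (attack ph S off \<alpha>) pre post r1" unfolding fwd_safe_def using I1 by simp
  qed (use assms(4,5) in auto)
  moreover have "(r - d) / r \<le> r1 / r" using r1 assms(5) by (simp add: divide_right_mono)
  ultimately show ?thesis by blast
qed

end
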